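(* Let $\mathfrak{g}$ be a finite-dimensional Lie algebra over a field $K$ of characteristic zero with trivial center. Then every weakly inner CPA-structure on $\mathfrak{g}$ is inner.
   Context: A CPA-structure on $\mathfrak{g}$ is a bilinear product $x\cdot y$ satisfying, for all $x,y,z$: $x\cdot y=y\cdot x$; $[x,y]\cdot z=x\cdot(y\cdot z)-y\cdot(x\cdot z)$; $x\cdot[y,z]=[x\cdot y,z]+[y,x\cdot z]$. It is weakly inner if there is a linear map $\phi\in\mathrm{End}(V)$ of the underlying vector space with $x\cdot y=[\phi(x),y]$ for all $x,y$; it is inner if moreover $\phi$ can be taken to be a Lie algebra homomorphism $\mathfrak{g}\to\mathfrak{g}$. *)

theory Defs
  imports Complex_Main
begin

definition lie_algebra ::
  "('k::field \<Rightarrow> 'v::ab_group_add \<Rightarrow> 'v) \<Rightarrow> ('v \<Rightarrow> 'v \<Rightarrow> 'v) \<Rightarrow> bool" where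
  "lie_algebra scale br \<longleftrightarrow>
     vector_space scale \<and>
     (\<forall>x. Vector_Spaces.linear scale scale (br x)) \<and>
     (\<forall>y. Vector_Spaces.linear scale scale (\<lambda>x. br x y)) \<and>
     (\<forall>x. br x x = 0) \<and>
     (\<forall>x y z. br x (br y z) + br y (br z x) + br z (br x y) = 0)"

definition finite_dim :: "('k::field \<Rightarrow> 'v::ab_group_add \<Rightarrow> 'v) \<Rightarrow> bool" where
  "finite_dim scale \<longleftrightarrow> (\<exists>B. finite B \<and> module.span scale B = UNIV)"

definition trivial_center :: "('v::ab_group_add \<Rightarrow> 'v \<Rightarrow> 'v) \<Rightarrow> bool" where
  "trivial_center br \<longleftrightarrow> (\<forall>z. (\<forall>x. br z x = 0) \<longrightarrow> z = 0)"

definition cpa_structure ::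
  "('k::field \<Rightarrow> 'v::ab_group_add \<Rightarrow> 'v) \<Rightarrow> ('v \<Rightarrow> 'v \<Rightarrow> 'v) \<Rightarrow> ('v \<Rightarrow> 'v \<Rightarrow> 'v) \<Rightarrow> bool" where
  "cpa_structure scale br p \<longleftrightarrow>
     (\<forall>x. Vector_Spaces.linear scale scale (p x)) \<and>
     (\<forall>y. Vector_Spaces.linear scale scale (\<lambda>x. p x y)) \<and>
     (\<forall>x y. p x y = p y x) \<and>
     (\<forall>x y z. p (br x y) z = p x (p y z) - p y (p x z)) \<and>
     (\<forall>x y z. p x (br y z) = br (p x y) z + br y (p x z))"

definition weakly_inner ::
  "('k::field \<Rightarrow> 'v::ab_group_add \<Rightarrow> 'v) \<Rightarrow> ('v \<Rightarrow> 'v \<Rightarrow> 'v) \<Rightarrow> ('v \<Rightarrow> 'v \<Rightarrow> 'v) \<Rightarrow> bool" where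
  "weakly_inner scale br p \<longleftrightarrow>
     (\<exists>\<phi>. Vector_Spaces.linear scale scale \<phi> \<and> (\<forall>x y. p x y = br (\<phi> x) y))"

definition inner_cpa ::
  "('k::field \<Rightarrow> 'v::ab_group_add \<Rightarrow> 'v) \<Rightarrow> ('v \<Rightarrow> 'v \<Rightarrow> 'v) \<Rightarrow> ('v \<Rightarrow> 'v \<Rightarrow> 'v) \<Rightarrow> bool" where
  "inner_cpa scale br p \<longleftrightarrow>
     (\<exists>\<phi>. Vector_Spaces.linear scale scale \<phi> \<and>
          (\<forall>x y. \<phi> (br x y) = br (\<phi> x) (\<phi> y)) \<and>
          (\<forall>x y. p x y = br (\<phi> x) y))"

end

theory Submission
  imports Defs
begin

theorem lemma2p8:
  fixes scale :: "'k::field_char_0 \<Rightarrow> 'v::ab_group_add \<Rightarrow> 'v"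
    and br p :: "'v \<Rightarrow> 'v \<Rightarrow> 'v"
  assumes "lie_algebra scale br"
    and "finite_dim scale"
    and "trivial_center br"
    and "cpa_structure scale br p"
    and "weakly_inner scale br p"
  shows "inner_cpa scale br p"
proof -
  from assms(5) obtain \<phi> where lin: "Vector_Spaces.linear scale scale \<phi>"
    and ph: "\<forall>x y. p x y = br (\<phi> x) y" unfolding weakly_inner_def by blast
  have VS: "vector_space scale" and L1: "\<And>x. Vector_Spaces.linear scale scale (br x)"
    and L2: "\<And>y. Vector_Spaces.linear scale scale (\<lambda>x. br x y)"
    and alt: "\<And>x. br x x = 0"
    and jac: "\<And>x y z. br x (br y z) + br y (br z x) + br z (br x y) = 0"
    using assms(1) unfolding lie_algebra_def by auto
  have add1: "\<And>x u v. br x (u + v) = br x u + br x v"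
    using module_hom.add[OF L1[unfolded linear_iff_module_hom]] by simp
  have add2: "\<And>y u v. br (u + v) y = br u y + br v y"
  proof -
    fix y u v show "br (u + v) y = br u y + br v y"
      using module_hom.add[OF L2[of y, unfolded linear_iff_module_hom]] by simp
  qed
  have diff2: "\<And>y u v. br (u - v) y = br u y - br v y"
  proof -
    fix y u v show "br (u - v) y = br u y - br v y"
      using module_hom.diff[OF L2[of y, unfolded linear_iff_module_hom]] by simp
  qed
  have anti: "\<And>x y. br x y = - br y x"
  proof -
    fix x y
    have "br (x + y) (x + y) = br x x + br x y + (br y x + br y y)" by (simp add: add1 add2)
    hence "br x y + br y x = 0" by (simp only: alt) simp
    thus "br x y = - br y x" by (simp add: eq_neg_iff_add_eq_0)
  qed
  have J: "\<And>a b z. br a (br b z) - br b (br a z) = br (br a b) z"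
  proof -
    fix a b z
    have j: "br a (br b z) + br b (br z a) + br z (br a b) = 0" by (rule jac)
    have e1: "br b (br z a) = - br b (br a z)"
      using anti[of z a] module_hom.neg[OF L1[of b, unfolded linear_iff_module_hom]] by simp
    have e2: "br z (br a b) = - br (br a b) z" by (rule anti)
    from j have "br a (br b z) - br b (br a z) - br (br a b) z = 0"
      unfolding e1 e2 by (simp add: algebra_simps)
    thus "br a (br b z) - br b (br a z) = br (br a b) z" by simp
  qed
  have hom: "\<forall>x y. \<phi> (br x y) = br (\<phi> x) (\<phi> y)"
  proof (intro allI)
    fix x y
    have "\<forall>z. br (\<phi> (br x y) - br (\<phi> x) (\<phi> y)) z = 0"
    proof
      fix z
      have "p (br x y) z = p x (p y z) - p y (p x z)"
        using assms(4) unfolding cpa_structure_def by blast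
      hence "br (\<phi> (br x y)) z = br (br (\<phi> x) (\<phi> y)) z"
        using ph J by simp
      thus "br (\<phi> (br x y) - br (\<phi> x) (\<phi> y)) z = 0" by (simp add: diff2)
    qed
    hence "\<phi> (br x y) - br (\<phi> x) (\<phi> y) = 0"
      using assms(3) unfolding trivial_center_def by blast
    thus "\<phi> (br x y) = br (\<phi> x) (\<phi> y)" by simp
  qed
  show ?thesis unfolding inner_cpa_def using lin hom ph by blast
qed

end
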